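(* Suppose GDD message passing reaches a fixed point in finitely many steps, i.e. it reaches messages $\boldsymbol\lambda$ such that performing the block update for any $c\in\mathcal{C}'$ does not change $\boldsymbol\lambda$. Let $b_t$, $t\in\mathcal{T}$, be the beliefs for these messages. Then for every $c\in\mathcal{C}'$ and every $s\in\mathcal{S}(c)\setminus\{c\}$ there exist $\hat{\mathbf{x}}_c\in\arg\max_{\mathbf{x}_c}b_c(\mathbf{x}_c)$ and $\bar{\mathbf{x}}_s\in\arg\max_{\mathbf{x}_s}b_s(\mathbf{x}_s)$ such that the restriction $\hat{\mathbf{x}}_s$ of $\hat{\mathbf{x}}_c$ to $s$ equals $\bar{\mathbf{x}}_s$.
   Context: Let $\mathcal{V}=\{1,\dots,n\}$; each variable $x_i$ takes values in a finite set, $\mathbf{x}_s=(x_i)_{i\in s}$ for $s\subseteq\mathcal{V}$. Let $\mathcal{C}$ be a collection of subsets of $\mathcal{V}$ with real potentials $\theta_c(\mathbf{x}_c)$. Let $\mathcal{C}'$ be a finite collection of subsets of $\mathcal{V}$ and for each $c\in\mathcal{C}'$ let $\mathcal{S}(c)$ be a collection of subsets of $c$ (possibly containing $c$), with $\mathcal{S}(c)\setminus\{c\}\neq\emptyset$ and $\mathcal{C}'\cup\bigcup_c\mathcal{S}(c)\supseteq\mathcal{C}$; put $\mathcal{T}=\mathcal{C}'\cup\bigcup_{c\in\mathcal{C}'}\mathcal{S}(c)$. Messages are reals $\lambda_{c\to s}(\mathbf{x}_s)$, $c\in\mathcal{C}'$, $s\in\mathcal{S}(c)\setminus\{c\}$.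 For $t\in\mathcal{T}$: $\hat\theta_t=\mathbb{1}(t\in\mathcal{C})\theta_t$; $\gamma_t(\mathbf{x}_t)=\mathbb{1}(t\in\mathcal{C}')\sum_{\hat s\in\mathcal{S}(t)\setminus\{t\}}\lambda_{t\to\hat s}(\mathbf{x}_{\hat s})$; $\lambda_t(\mathbf{x}_t)=\sum_{c'\in\mathcal{C}':\,t\in\mathcal{S}(c')\setminus\{c'\}}\lambda_{c'\to t}(\mathbf{x}_t)$; beliefs $b_t=\hat\theta_t+\lambda_t-\gamma_t$. For $s\in\mathcal{S}(c)\setminus\{c\}$, $\lambda_s^{-c}(\mathbf{x}_s)=\sum_{\hat c\in\mathcal{C}':\,\hat c\ne c,\ s\in\mathcal{S}(\hat c)\setminus\{\hat c\}}\lambda_{\hat c\to s}(\mathbf{x}_s)$. GDD message passing starts from zero messages and repeatedly sweeps over $c\in\mathcal{C}'$, each time applying the block update: replace simultaneously every $\lambda_{c\to s}(\mathbf{x}_s)$, $s\in\mathcal{S}(c)\setminus\{c\}$, by $\lambda^*_{c\to s}(\mathbf{x}_s)=-\hat\theta_s(\mathbf{x}_s)+\gamma_s(\mathbf{x}_s)-\lambda_s^{-c}(\mathbf{x}_s)+\frac{1}{|\mathcal{S}(c)\setminus\{c\}|}\max_{\mathbf{x}_{c\setminus s}}[\hat\theta_c(\mathbf{x}_c)+\lambda_c(\mathbf{x}_c)+\sum_{\hat s\in\mathcal{S}(c)\setminus\{c\}}(\hat\theta_{\hat s}-\gamma_{\hat s}+\lambda^{-c}_{\hat s})(\mathbf{x}_{\hat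 s})]$, computed from the current messages. *)

theory Defs
  imports Complex_Main "HOL-Library.FuncSet"
begin

text \<open>Assignments to a set of variables s are extensional functions in PiE s D
 (D i is the finite value set of variable i).  Messages are represented as
 lam :: nat set => nat set => (nat => 'v) => real, lam c s x = lambda_{c->s}(x_s).\<close>

definition theta_hat :: "nat set set \<Rightarrow> (nat set \<Rightarrow> (nat \<Rightarrow> 'v) \<Rightarrow> real) \<Rightarrow> nat set \<Rightarrow> (nat \<Rightarrow> 'v) \<Rightarrow> real" where
  "theta_hat C \<theta> t x = (if t \<in> C then \<theta> t x else 0)"

definition gamma :: "nat set set \<Rightarrow> (nat set \<Rightarrow> nat set set) \<Rightarrow> (nat set \<Rightarrow> nat set \<Rightarrow> (nat \<Rightarrow> 'v) \<Rightarrow> real)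
    \<Rightarrow> nat set \<Rightarrow> (nat \<Rightarrow> 'v) \<Rightarrow> real" where
  "gamma Cp S lam t x = (if t \<in> Cp then (\<Sum>s\<in>S t - {t}. lam t s (restrict x s)) else 0)"

definition lam_in :: "nat set set \<Rightarrow> (nat set \<Rightarrow> nat set set) \<Rightarrow> (nat set \<Rightarrow> nat set \<Rightarrow> (nat \<Rightarrow> 'v) \<Rightarrow> real)
    \<Rightarrow> nat set \<Rightarrow> (nat \<Rightarrow> 'v) \<Rightarrow> real" where
  "lam_in Cp S lam t x = (\<Sum>c'\<in>{c'\<in>Cp. t \<in> S c' - {c'}}. lam c' t x)"

definition lam_minus :: "nat set set \<Rightarrow> (nat set \<Rightarrow> nat set set) \<Rightarrow> (nat set \<Rightarrow> nat set \<Rightarrow> (nat \<Rightarrow> 'v) \<Rightarrow> real)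
    \<Rightarrow> nat set \<Rightarrow> nat set \<Rightarrow> (nat \<Rightarrow> 'v) \<Rightarrow> real" where
  "lam_minus Cp S lam c s x = (\<Sum>c'\<in>{c'\<in>Cp. c' \<noteq> c \<and> s \<in> S c' - {c'}}. lam c' s x)"

definition belief :: "nat set set \<Rightarrow> (nat set \<Rightarrow> (nat \<Rightarrow> 'v) \<Rightarrow> real) \<Rightarrow> nat set set \<Rightarrow> (nat set \<Rightarrow> nat set set)
    \<Rightarrow> (nat set \<Rightarrow> nat set \<Rightarrow> (nat \<Rightarrow> 'v) \<Rightarrow> real) \<Rightarrow> nat set \<Rightarrow> (nat \<Rightarrow> 'v) \<Rightarrow> real" where
  "belief C \<theta> Cp S lam t x = theta_hat C \<theta> t x + lam_in Cp S lam t x - gamma Cp S lam t x"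

text \<open>The optimal message lambda*_{c->s}(x_s); the max over x_{c \ s} is the max
 over all assignments y to c extending x.\<close>
definition msg_star :: "(nat \<Rightarrow> 'v set) \<Rightarrow> nat set set \<Rightarrow> (nat set \<Rightarrow> (nat \<Rightarrow> 'v) \<Rightarrow> real) \<Rightarrow> nat set set
    \<Rightarrow> (nat set \<Rightarrow> nat set set) \<Rightarrow> (nat set \<Rightarrow> nat set \<Rightarrow> (nat \<Rightarrow> 'v) \<Rightarrow> real)
    \<Rightarrow> nat set \<Rightarrow> nat set \<Rightarrow> (nat \<Rightarrow> 'v) \<Rightarrow> real" where
  "msg_star D C \<theta> Cp S lam c s x =
     - theta_hat C \<theta> s x + gamma Cp S lam s x - lam_minus Cp S lam c s x
     + (1 / real (card (S c - {c}))) *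
       Max ((\<lambda>y. theta_hat C \<theta> c y + lam_in Cp S lam c y
               + (\<Sum>s'\<in>S c - {c}. theta_hat C \<theta> s' (restrict y s') - gamma Cp S lam s' (restrict y s')
                                    + lam_minus Cp S lam c s' (restrict y s')))
            ` {y \<in> PiE c D. restrict y s = x})"

definition block_update :: "(nat \<Rightarrow> 'v set) \<Rightarrow> nat set set \<Rightarrow> (nat set \<Rightarrow> (nat \<Rightarrow> 'v) \<Rightarrow> real) \<Rightarrow> nat set set
    \<Rightarrow> (nat set \<Rightarrow> nat set set) \<Rightarrow> nat set \<Rightarrow> (nat set \<Rightarrow> nat set \<Rightarrow> (nat \<Rightarrow> 'v) \<Rightarrow> real)
    \<Rightarrow> (nat set \<Rightarrow> nat set \<Rightarrow> (nat \<Rightarrow> 'v) \<Rightarrow> real)" where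
  "block_update D C \<theta> Cp S c lam =
     (\<lambda>c' s x. if c' = c \<and> s \<in> S c - {c} \<and> x \<in> PiE s D
               then msg_star D C \<theta> Cp S lam c s x else lam c' s x)"

fun gdd_iter :: "(nat \<Rightarrow> 'v set) \<Rightarrow> nat set set \<Rightarrow> (nat set \<Rightarrow> (nat \<Rightarrow> 'v) \<Rightarrow> real) \<Rightarrow> nat set set
    \<Rightarrow> (nat set \<Rightarrow> nat set set) \<Rightarrow> nat set list \<Rightarrow> nat
    \<Rightarrow> (nat set \<Rightarrow> nat set \<Rightarrow> (nat \<Rightarrow> 'v) \<Rightarrow> real)" where
  "gdd_iter D C \<theta> Cp S ord 0 = (\<lambda>_ _ _. 0)"
| "gdd_iter D C \<theta> Cp S ord (Suc m) =
     block_update D C \<theta> Cp S (ord ! (m mod length ord)) (gdd_iter D C \<theta> Cp S ord m)"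

definition argmax_on :: "'a set \<Rightarrow> ('a \<Rightarrow> real) \<Rightarrow> 'a set" where
  "argmax_on A f = {x \<in> A. \<forall>y\<in>A. f y \<le> f x}"

end

theory Submission
  imports Defs
begin

lemma lam_in_split:
  assumes "finite Cp" "c \<in> Cp" "s \<in> S c - {c}"
  shows "lam_in Cp S lam s x = lam c s x + lam_minus Cp S lam c s x"
proof -
  have eq: "{c'\<in>Cp. c' \<noteq> c \<and> s \<in> S c' - {c'}} = {c'\<in>Cp. s \<in> S c' - {c'}} - {c}" by auto
  have "lam_in Cp S lam s x = lam c s x + (\<Sum>c'\<in>{c'\<in>Cp. s \<in> S c' - {c'}} - {c}. lam c' s x)"
    unfolding lam_in_def using assms by (subst sum.remove[of _ c]) auto
  then show ?thesis unfolding lam_minus_def eq .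
qed

theorem proposition4:
  fixes n :: nat and D :: "nat \<Rightarrow> 'v set"
    and C Cp :: "nat set set" and S :: "nat set \<Rightarrow> nat set set"
    and \<theta> :: "nat set \<Rightarrow> (nat \<Rightarrow> 'v) \<Rightarrow> real"
    and ord :: "nat set list" and m :: nat
    and lam :: "nat set \<Rightarrow> nat set \<Rightarrow> (nat \<Rightarrow> 'v) \<Rightarrow> real"
  assumes dom: "\<forall>i\<in>{1..n}. finite (D i) \<and> D i \<noteq> {}"
    and C_sub: "\<forall>c\<in>C. c \<subseteq> {1..n}"
    and Cp_fin: "finite Cp"
    and Cp_sub: "\<forall>c\<in>Cp. c \<subseteq> {1..n}"
    and S_sub: "\<forall>c\<in>Cp. S c \<subseteq> Pow c \<and> S c - {c} \<noteq> {}"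
    and cover: "C \<subseteq> Cp \<union> \<Union>(S ` Cp)"
    and ord: "distinct ord" "set ord = Cp"
    and reached: "lam = gdd_iter D C \<theta> Cp S ord m"
    and fixpt: "\<forall>c\<in>Cp. block_update D C \<theta> Cp S c lam = lam"
  shows "\<forall>c\<in>Cp. \<forall>s\<in>S c - {c}.
           \<exists>xc\<in>argmax_on (PiE c D) (belief C \<theta> Cp S lam c).
           \<exists>xs\<in>argmax_on (PiE s D) (belief C \<theta> Cp S lam s).
             restrict xc s = xs"
proof (intro ballI)
  fix c s0 assume c: "c \<in> Cp" and s0: "s0 \<in> S c - {c}"
  define SS where "SS = S c - {c}"
  define k where "k = real (card SS)"
  define b where "b = belief C \<theta> Cp S lam"
  define M where "M = (\<lambda>y. theta_hat C \<theta> c y + lam_in Cp S lam c y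
               + (\<Sum>s'\<in>S c - {c}. theta_hat C \<theta> s' (restrict y s') - gamma Cp S lam s' (restrict y s')
                                    + lam_minus Cp S lam c s' (restrict y s')))"
  define E where "E = (\<lambda>s x. {y \<in> PiE c D. restrict y s = x})"
  have csub: "c \<subseteq> {1..n}" using Cp_sub c by auto
  have cfin: "finite c" using csub finite_subset by blast
  have SSsub: "\<And>s. s \<in> SS \<Longrightarrow> s \<subseteq> c" using S_sub c unfolding SS_def by auto
  have SSfin: "finite SS" unfolding SS_def using S_sub c cfin
    by (meson finite_Diff finite_Pow_iff finite_subset)
  have SSne: "SS \<noteq> {}" using S_sub c unfolding SS_def by auto
  have kpos: "k > 0" unfolding k_def using SSfin SSne by (simp add: card_gt_0_iff)
  have Pfin: "finite (PiE c D)" using cfin dom csub by (intro finite_PiE) auto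
  have restr: "\<And>y s. y \<in> PiE c D \<Longrightarrow> s \<subseteq> c \<Longrightarrow> restrict y s \<in> PiE s D"
    by (auto simp: PiE_iff)
  have Efin: "\<And>s x. finite (E s x)" unfolding E_def using Pfin by auto
  have Ene: "\<And>s x. s \<subseteq> c \<Longrightarrow> x \<in> PiE s D \<Longrightarrow> E s x \<noteq> {}"
  proof -
    fix s x assume sc: "s \<subseteq> c" and x: "x \<in> PiE s D"
    define y where "y = (\<lambda>i. if i \<in> s then x i else if i \<in> c then (SOME v. v \<in> D i) else undefined)"
    have "y \<in> PiE c D" using x sc csub dom unfolding y_def
    proof (auto simp: PiE_iff extensional_def)
      fix i assume "i \<in> c" 
      then have "D i \<noteq> {}" using csub dom by auto
      then show "(SOME v. v \<in> D i) \<in> D i" by (simp add: some_in_eq)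
    qed
    moreover have "restrict y s = x" using x unfolding y_def
      by (auto simp: PiE_iff extensional_def)
    ultimately show "E s x \<noteq> {}" unfolding E_def by auto
  qed
  have F1: "\<And>s x. s \<in> SS \<Longrightarrow> x \<in> PiE s D \<Longrightarrow> b s x = Max (M ` E s x) / k"
  proof -
    fix s x assume s: "s \<in> SS" and x: "x \<in> PiE s D"
    have "block_update D C \<theta> Cp S c lam c s x = lam c s x" using fixpt c by simp
    hence "msg_star D C \<theta> Cp S lam c s x = lam c s x"
      using s x unfolding block_update_def SS_def by simp
    moreover have "lam_in Cp S lam s x = lam c s x + lam_minus Cp S lam c s x"
      using lam_in_split[OF Cp_fin c] s unfolding SS_def by blast
    ultimately show "b s x = Max (M ` E s x) / k"
      unfolding b_def belief_def msg_star_def M_def E_def k_def SS_def by simp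
  qed
  have F2: "\<And>y. b c y = M y - (\<Sum>s\<in>SS. b s (restrict y s))"
  proof -
    fix y
    have "(\<Sum>s\<in>SS. b s (restrict y s)) = (\<Sum>s\<in>SS. lam c s (restrict y s) +
       (theta_hat C \<theta> s (restrict y s) - gamma Cp S lam s (restrict y s) + lam_minus Cp S lam c s (restrict y s)))"
      unfolding b_def belief_def
      using lam_in_split[OF Cp_fin c] by (intro sum.cong) (auto simp: SS_def)
    also have "\<dots> = (\<Sum>s\<in>SS. lam c s (restrict y s)) + (\<Sum>s\<in>SS.
       (theta_hat C \<theta> s (restrict y s) - gamma Cp S lam s (restrict y s) + lam_minus Cp S lam c s (restrict y s)))"
      by (rule sum.distrib)
    finally show "b c y = M y - (\<Sum>s\<in>SS. b s (restrict y s))"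
      unfolding M_def using c by (simp add: b_def belief_def gamma_def SS_def)
  qed
  have F3: "\<And>y s. y \<in> PiE c D \<Longrightarrow> M y \<le> Max (M ` E s (restrict y s))"
    using Efin unfolding E_def by (intro Max_ge) auto
  obtain ys where ys: "ys \<in> PiE c D" and ysmax: "\<And>y. y \<in> PiE c D \<Longrightarrow> M y \<le> M ys"
  proof -
    have "PiE c D \<noteq> {}" using Ene[of "{}" "\<lambda>_. undefined"] unfolding E_def by auto
    then obtain ys where "ys \<in> PiE c D" "M ys = Max (M ` PiE c D)"
      using Pfin by (metis (mono_tags, lifting) Max_in finite_imageI image_iff image_is_empty)
    then show ?thesis using that Pfin by (metis Max_ge finite_imageI image_eqI)
  qed
  have bmaxE: "\<And>s x. s \<in> SS \<Longrightarrow> x \<in> PiE s D \<Longrightarrow> Max (M ` E s x) \<le> M ys"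
  proof -
    fix s x assume "s \<in> SS" "x \<in> PiE s D"
    then have "E s x \<noteq> {}" using Ene SSsub by blast
    then show "Max (M ` E s x) \<le> M ys" using Efin ysmax unfolding E_def
      by (subst Max_le_iff) auto
  qed
  have bys: "\<And>s. s \<in> SS \<Longrightarrow> b s (restrict ys s) = M ys / k"
  proof -
    fix s assume s: "s \<in> SS"
    have r: "restrict ys s \<in> PiE s D" using restr ys SSsub s by blast
    have "Max (M ` E s (restrict ys s)) = M ys"
      using F3[OF ys, of s] bmaxE[OF s r] by linarith
    then show "b s (restrict ys s) = M ys / k" using F1[OF s r] by simp
  qed
  have bc0: "b c ys = 0"
  proof -
    have "(\<Sum>s\<in>SS. b s (restrict ys s)) = (\<Sum>s\<in>SS. M ys / k)" using bys by simp
    also have "\<dots> = M ys" using kpos unfolding k_def by simp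
    finally show ?thesis using F2 by simp
  qed
  have bcle: "\<And>y. y \<in> PiE c D \<Longrightarrow> b c y \<le> 0"
  proof -
    fix y assume y: "y \<in> PiE c D"
    have "(\<Sum>s\<in>SS. M y / k) \<le> (\<Sum>s\<in>SS. b s (restrict y s))"
    proof (rule sum_mono)
      fix s assume s: "s \<in> SS"
      have r: "restrict y s \<in> PiE s D" using restr y SSsub s by blast
      show "M y / k \<le> b s (restrict y s)" using F1[OF s r] F3[OF y, of s] kpos
        by (simp add: divide_right_mono)
    qed
    moreover have "(\<Sum>s\<in>SS. M y / k) = M y" using kpos unfolding k_def by simp
    ultimately show "b c y \<le> 0" using F2 by simp
  qed
  have s0SS: "s0 \<in> SS" using s0 SS_def by simp
  have r0: "restrict ys s0 \<in> PiE s0 D" using restr ys SSsub s0SS by blast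
  have "ys \<in> argmax_on (PiE c D) (belief C \<theta> Cp S lam c)"
    unfolding argmax_on_def using ys bc0 bcle b_def by auto
  moreover have "restrict ys s0 \<in> argmax_on (PiE s0 D) (belief C \<theta> Cp S lam s0)"
  proof -
    have "\<And>x. x \<in> PiE s0 D \<Longrightarrow> b s0 x \<le> b s0 (restrict ys s0)"
      using F1[OF s0SS] bys[OF s0SS] bmaxE[OF s0SS] kpos by (simp add: divide_right_mono)
    then show ?thesis unfolding argmax_on_def b_def using r0 by auto
  qed
  ultimately show "\<exists>xc\<in>argmax_on (PiE c D) (belief C \<theta> Cp S lam c).
           \<exists>xs\<in>argmax_on (PiE s0 D) (belief C \<theta> Cp S lam s0). restrict xc s0 = xs" by blast
qed

end
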